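(* Let $n\ge2$, let $a_1,\dots,a_n$ be real numbers, $C(t)=\sum_{j=1}^n a_j\cos jt$, $S(t)=\sum_{j=1}^n a_j\sin jt$, and suppose $S(t_1)=0$ with $t_1\in(0,\pi)$. Define $a^{(1)}_1,\dots,a^{(1)}_{n-1}$ by setting $a^{(1)}_n=a^{(1)}_{n+1}=0$ and, for $k=n,n-1,\dots,2$ (in this order), $$a^{(1)}_{k-1}=2a_k+2\cos t_1\, a^{(1)}_k-a^{(1)}_{k+1}.$$ Then $C(t_1)=-\dfrac{a^{(1)}_1}{2}$.
   Context: The recursion expresses $a^{(1)}_1,\dots,a^{(1)}_{n-1}$ uniquely in terms of $a_2,\dots,a_n$ and $\cos t_1$; it is equivalent to the equations $a_k=\tfrac12a^{(1)}_{k-1}-\cos t_1\,a^{(1)}_k+\tfrac12a^{(1)}_{k+1}$ for $k=2,\dots,n$ (with $a^{(1)}_n=a^{(1)}_{n+1}=0$). *)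

theory Defs
  imports Complex_Main
begin

text \<open>Downward recursion. aux a n c m is the coefficient a^(1)_{n+1-m}, for m = 0,1,...:
  m = 0, 1 give a^(1)_{n+1} = a^(1)_n = 0, and for m \<ge> 2 (k = n+2-m)
  a^(1)_{k-1} = 2 a_k + 2 c a^(1)_k - a^(1)_{k+1}.\<close>
fun coef1_aux :: "(nat \<Rightarrow> real) \<Rightarrow> nat \<Rightarrow> real \<Rightarrow> nat \<Rightarrow> real" where
  "coef1_aux a n c 0 = 0"
| "coef1_aux a n c (Suc 0) = 0"
| "coef1_aux a n c (Suc (Suc m)) =
     2 * a (n - m) + 2 * c * coef1_aux a n c (Suc m) - coef1_aux a n c m"

definition coef1 :: "(nat \<Rightarrow> real) \<Rightarrow> nat \<Rightarrow> real \<Rightarrow> nat \<Rightarrow> real" where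
  "coef1 a n t1 k = coef1_aux a n (cos t1) (n + 1 - k)"

end

theory Submission
  imports Defs
begin

lemma tele:
  fixes a :: "nat \<Rightarrow> real" and g :: "real \<Rightarrow> real"
  assumes g: "\<And>x. g (x + t) + g (x - t) = 2 * cos t * g x"
  shows "m < n \<Longrightarrow> 2 * (\<Sum>j=n-m..n. a j * g (real j * t)) =
     coef1_aux a n (cos t) (Suc (Suc m)) * g ((real n - real m) * t)
     - coef1_aux a n (cos t) (Suc m) * g ((real n - real m - 1) * t)"
proof (induction m)
  case 0
  then show ?case by simp
next
  case (Suc m)
  have IH: "2 * (\<Sum>j=n-m..n. a j * g (real j * t)) =
     coef1_aux a n (cos t) (Suc (Suc m)) * g ((real n - real m) * t)
     - coef1_aux a n (cos t) (Suc m) * g ((real n - real m - 1) * t)"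
    using Suc by simp
  have set: "{n - Suc m..n} = insert (n - Suc m) {n-m..n}" using Suc.prems by auto
  have sum: "(\<Sum>j=n - Suc m..n. a j * g (real j * t)) =
     a (n - Suc m) * g (real (n - Suc m) * t) + (\<Sum>j=n-m..n. a j * g (real j * t))"
    unfolding set using Suc.prems by (subst sum.insert) auto
  have rn: "real (n - Suc m) = real n - real m - 1" using Suc.prems by auto
  have gi: "g ((real n - real m) * t) + g ((real n - real m - 2) * t)
      = 2 * cos t * g ((real n - real m - 1) * t)"
    using g[of "(real n - real m - 1) * t"] by (simp add: algebra_simps)
  have r2: "real n - real (Suc m) - 1 = real n - real m - 2" by simp
  have r4: "real n - real m - 1 - 1 = real n - real m - 2" by simp
  have r3: "real n - real (Suc m) = real n - real m - 1" by simp
  have rec: "coef1_aux a n (cos t) (Suc (Suc (Suc m))) = 2 * a (n - Suc m)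
     + 2 * cos t * coef1_aux a n (cos t) (Suc (Suc m)) - coef1_aux a n (cos t) (Suc m)"
    by simp
  have alg: "\<And>x A B D F1 F2 c::real. A + D = 2 * c * B \<Longrightarrow>
     2 * (x * B) + (F2 * A - F1 * B) = (2 * x + 2 * c * F2 - F1) * B - F2 * D"
  proof -
    fix x A B D F1 F2 c :: real
    assume h: "A + D = 2 * c * B"
    have hA: "A = 2 * c * B - D" using h by simp
    show "2 * (x * B) + (F2 * A - F1 * B) = (2 * x + 2 * c * F2 - F1) * B - F2 * D"
      unfolding hA by (simp add: algebra_simps)
  qed
  show ?case
    unfolding sum distrib_left IH rn r2 r3 rec r4
    by (rule alg[OF gi])
qed

theorem corollary1:
  fixes a :: "nat \<Rightarrow> real" and n :: nat and t1 :: real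
  assumes "n \<ge> 2"
    and "(\<Sum>j=1..n. a j * sin (real j * t1)) = 0"
    and "0 < t1" and "t1 < pi"
  shows "(\<Sum>j=1..n. a j * cos (real j * t1)) = - coef1 a n t1 1 / 2"
proof -
  let ?f = "coef1_aux a n (cos t1)"
  have m: "n - 1 < n" "n - (n - 1) = 1" "Suc (Suc (n-1)) = n + 1" "Suc (n - 1) = n"
    "real n - real (n - 1) = 1" using assms(1) by auto
  have gs: "\<And>x. sin (x + t1) + sin (x - t1) = 2 * cos t1 * sin x"
    by (simp add: sin_add sin_diff)
  have gc: "\<And>x. cos (x + t1) + cos (x - t1) = 2 * cos t1 * cos x"
    by (simp add: cos_add cos_diff)
  have S: "2 * (\<Sum>j=1..n. a j * sin (real j * t1)) = ?f (n+1) * sin t1"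
    using tele[of sin t1, OF gs m(1), of a] unfolding m by simp
  have C: "2 * (\<Sum>j=1..n. a j * cos (real j * t1)) = ?f (n+1) * cos t1 - ?f n"
    using tele[of cos t1, OF gc m(1), of a] unfolding m by simp
  have "sin t1 > 0" using assms by (simp add: sin_gt_zero)
  then have "?f (n+1) = 0" using S assms(2) by simp
  then show ?thesis using C by (simp add: coef1_def)
qed

end
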